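(* Let $n\ge 1$ and let $\mathcal{A}$ be the real central hyperplane arrangement in $\mathbb{R}^{n+1}$ consisting of the hyperplanes $\{x_i=x_j\}$ and $\{x_i=-x_j\}$ for $1\le i<j\le n+1$, together with the hyperplane $\{x_1=0\}$. Then $\mathcal{A}$ is simplicial, i.e. every chamber (connected component of the complement of the union of the hyperplanes in $\mathbb{R}^{n+1}$) is an open simplicial cone. *)

theory Defs
  imports "HOL-Analysis.Analysis"
begin

text \<open>Coordinates of R^(n+1) are indexed by a finite, well-ordered type 'n
  (CARD('n) = n+1); the order on 'n plays the role of 1 < 2 < ... < n+1, and
  the first coordinate x_1 is the coordinate at the least index.\<close>

definition first_idx :: "'n::{finite,wellorder}" where
  "first_idx = (LEAST i. True)"

definition arrB :: "(real ^ 'n::{finite,wellorder}) set set" where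
  "arrB = {{x. x $ i = x $ j} | i j. i < j}
        \<union> {{x. x $ i = - (x $ j)} | i j. i < j}
        \<union> {{x. x $ first_idx = 0}}"

definition chambers :: "('a::real_normed_vector) set set \<Rightarrow> 'a set set" where
  "chambers A = components (UNIV - \<Union>A)"

definition open_simplicial_cone :: "('a::euclidean_space) set \<Rightarrow> bool" where
  "open_simplicial_cone C \<longleftrightarrow>
     (\<exists>V. finite V \<and> independent V \<and> card V = DIM('a) \<and>
          C = {(\<Sum>v\<in>V. c v *\<^sub>R v) | c. \<forall>v\<in>V. c v > 0})"

definition simplicial_arrangement :: "('a::euclidean_space) set set \<Rightarrow> bool" where
  "simplicial_arrangement A \<longleftrightarrow> (\<forall>C\<in>chambers A. open_simplicial_cone C)"

end

theory Submission imports Defs begin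

lemma biorth:
  fixes w v :: "nat \<Rightarrow> 'a::euclidean_space"
  assumes N: "N = DIM('a)"
  and bo: "\<And>i j. i<N \<Longrightarrow> j<N \<Longrightarrow> w i \<bullet> v j = (if i = j then 1 else 0)"
  shows "open_simplicial_cone {x. \<forall>k<N. w k \<bullet> x > 0}"
proof -
  have inj: "inj_on v {..<N}"
    by (rule inj_onI) (metis bo lessThan_iff zero_neq_one)
  define V where "V = v ` {..<N}"
  have fin: "finite V" and cardV: "card V = N"
    using inj by (auto simp: V_def card_image)
  have sumV: "\<And>c. (\<Sum>u\<in>V. c u *\<^sub>R u) = (\<Sum>k<N. c (v k) *\<^sub>R v k)"
    unfolding V_def using inj by (simp add: sum.reindex)
  have wsum: "\<And>c i. i<N \<Longrightarrow> w i \<bullet> (\<Sum>k<N. c k *\<^sub>R v k) = c i"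
  proof -
    fix c i assume i: "i < N"
    have "w i \<bullet> (\<Sum>k<N. c k *\<^sub>R v k) = (\<Sum>k<N. c k * (if i = k then 1 else 0))"
      using i by (auto simp: inner_sum_right bo intro!: sum.cong)
    also have "\<dots> = c i" using i by (simp add: if_distrib[of "\<lambda>t. c _ * t"] sum.delta cong: if_cong)
    finally show "w i \<bullet> (\<Sum>k<N. c k *\<^sub>R v k) = c i" .
  qed
  have ind: "independent V"
    unfolding independent_explicit
  proof (intro conjI allI impI ballI)
    show "finite V" by (rule fin)
    fix c u assume s: "(\<Sum>v\<in>V. c v *\<^sub>R v) = 0" and u: "u \<in> V"
    then obtain i where i: "i < N" "u = v i" unfolding V_def by auto
    have "w i \<bullet> (\<Sum>k<N. (c \<circ> v) k *\<^sub>R v k) = 0" using s sumV by simp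
    then show "c u = 0" using wsum[OF i(1)] i by simp
  qed
  have sp: "UNIV \<subseteq> span V"
    using card_eq_dim[of V UNIV] ind fin cardV N by simp
  show ?thesis unfolding open_simplicial_cone_def
  proof (intro exI conjI)
    show "finite V" "independent V" "card V = DIM('a)" using fin ind cardV N by auto
    show "{x. \<forall>k<N. w k \<bullet> x > 0} = {\<Sum>v\<in>V. c v *\<^sub>R v |c. \<forall>v\<in>V. 0 < c v}"
    proof (intro equalityI subsetI)
      fix x assume x: "x \<in> {x. \<forall>k<N. w k \<bullet> x > 0}"
      have "x \<in> span V" using sp by auto
      then obtain a where a: "x = (\<Sum>v\<in>V. a v *\<^sub>R v)" using span_finite[OF fin] by auto
      have "\<forall>u\<in>V. 0 < a u"
      proof
        fix u assume "u \<in> V"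
        then obtain i where i: "i < N" "u = v i" unfolding V_def by auto
        have "w i \<bullet> (\<Sum>k<N. (a \<circ> v) k *\<^sub>R v k) > 0" using x a sumV i by simp
        then show "0 < a u" using wsum[OF i(1)] i by simp
      qed
      then show "x \<in> {\<Sum>v\<in>V. c v *\<^sub>R v |c. \<forall>v\<in>V. 0 < c v}" using a by auto
    next
      fix x assume "x \<in> {\<Sum>v\<in>V. c v *\<^sub>R v |c. \<forall>v\<in>V. 0 < c v}"
      then obtain c where c: "x = (\<Sum>v\<in>V. c v *\<^sub>R v)" "\<forall>u\<in>V. 0 < c u" by auto
      have "\<forall>k<N. w k \<bullet> x > 0"
      proof (intro allI impI)
        fix k assume k: "k < N"
        have "w k \<bullet> x = (c \<circ> v) k" using c(1) sumV wsum[OF k, of "c \<circ> v"] by simp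
        then show "w k \<bullet> x > 0" using c(2) k V_def by auto
      qed
      then show "x \<in> {x. \<forall>k<N. w k \<bullet> x > 0}" by simp
    qed
  qed
qed
lemma U_char:
  fixes x :: "real ^ 'n::{finite,wellorder}"
  shows "x \<notin> \<Union>arrB \<longleftrightarrow>
     x $ first_idx \<noteq> 0 \<and> (\<forall>i j. i \<noteq> j \<longrightarrow> \<bar>x $ i\<bar> \<noteq> \<bar>x $ j\<bar>)"
proof -
  have "x \<in> \<Union>arrB \<longleftrightarrow>
     (\<exists>i j. i < j \<and> x $ i = x $ j) \<or> (\<exists>i j. i < j \<and> x $ i = - x $ j) \<or> x $ first_idx = 0"
    unfolding arrB_def by blast
  also have "\<dots> \<longleftrightarrow> x $ first_idx = 0 \<or> (\<exists>i j. i \<noteq> j \<and> \<bar>x $ i\<bar> = \<bar>x $ j\<bar>)"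
  proof
    assume "(\<exists>i j. i < j \<and> x $ i = x $ j) \<or> (\<exists>i j. i < j \<and> x $ i = - x $ j) \<or> x $ first_idx = 0"
    then show "x $ first_idx = 0 \<or> (\<exists>i j. i \<noteq> j \<and> \<bar>x $ i\<bar> = \<bar>x $ j\<bar>)"
      by (metis abs_minus_cancel order_less_irrefl)
  next
    assume "x $ first_idx = 0 \<or> (\<exists>i j. i \<noteq> j \<and> \<bar>x $ i\<bar> = \<bar>x $ j\<bar>)"
    then show "(\<exists>i j. i < j \<and> x $ i = x $ j) \<or> (\<exists>i j. i < j \<and> x $ i = - x $ j) \<or> x $ first_idx = 0"
    proof
      assume "\<exists>i j. i \<noteq> j \<and> \<bar>x $ i\<bar> = \<bar>x $ j\<bar>"
      then obtain i j where ij: "i \<noteq> j" "\<bar>x $ i\<bar> = \<bar>x $ j\<bar>" by blast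
      show ?thesis
      proof (cases "i < j")
        case True then show ?thesis using ij(2) by (metis abs_eq_iff)
      next
        case False then have "j < i" using ij(1) by simp
        then show ?thesis using ij(2) by (metis abs_eq_iff minus_minus)
      qed
    qed simp
  qed
  finally show ?thesis by blast
qed

lemma sort_abs:
  fixes p :: "real ^ 'n::{finite,wellorder}"
  assumes "\<And>i j. i \<noteq> j \<Longrightarrow> \<bar>p $ i\<bar> \<noteq> \<bar>p $ j\<bar>"
  shows "\<exists>\<sigma>. bij_betw \<sigma> {..<CARD('n)} UNIV \<and> (\<forall>a b. a < b \<longrightarrow> b < CARD('n) \<longrightarrow> \<bar>p $ \<sigma> b\<bar> < \<bar>p $ \<sigma> a\<bar>)"
proof -
  define f where "f = (\<lambda>i. - \<bar>p $ i\<bar>)"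
  define xs where "xs = sort_key f (sorted_list_of_set (UNIV :: 'n set))"
  have d: "distinct xs" and s: "set xs = UNIV" unfolding xs_def by auto
  have len: "length xs = CARD('n)" using distinct_card[OF d] s by simp
  have so: "sorted (map f xs)" unfolding xs_def by simp
  show ?thesis
  proof (intro exI conjI allI impI)
    show "bij_betw ((!) xs) {..<CARD('n)} UNIV" using bij_betw_nth[OF d] len s by simp
    fix a b assume ab: "a < b" "b < CARD('n)"
    have "f (xs ! a) \<le> f (xs ! b)" using so ab len
      by (metis (no_types, lifting) length_map nth_map order_less_imp_le order_less_trans sorted_iff_nth_mono)
    moreover have "xs ! a \<noteq> xs ! b" using d ab len nth_eq_iff_index_eq by fastforce
    ultimately show "\<bar>p $ (xs ! b)\<bar> < \<bar>p $ (xs ! a)\<bar>" using assms unfolding f_def by fastforce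
  qed
qed

lemma chain_dec:
  fixes t :: "nat \<Rightarrow> real"
  assumes "\<And>k. k < L \<Longrightarrow> t (Suc k) < t k" "a < b" "b \<le> L"
  shows "t b < t a"
  using assms(2,3)
proof (induction b)
  case 0 then show ?case by simp
next
  case (Suc b)
  show ?case
  proof (cases "a = b")
    case True then show ?thesis using assms(1) Suc by simp
  next
    case False then have "t b < t a" using Suc by simp
    moreover have "t (Suc b) < t b" using assms(1) Suc by simp
    ultimately show ?thesis by simp
  qed
qed

lemma inU:
  fixes x :: "real ^ 'n::{finite,wellorder}"
  assumes bij: "bij_betw \<sigma> {..<N} UNIV" and L: "N = Suc L"
    and dec: "\<And>k. k < L \<Longrightarrow> t (Suc k) < t k"
    and eq: "\<And>k. k \<le> L \<Longrightarrow> \<bar>x $ \<sigma> k\<bar> = t k"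
    and f: "x $ first_idx \<noteq> 0"
  shows "x \<notin> \<Union>arrB"
  unfolding U_char
proof (intro conjI allI impI f)
  fix i j :: 'n assume ij: "i \<noteq> j"
  obtain a where a: "a < N" "\<sigma> a = i" using bij unfolding bij_betw_def by (metis UNIV_I imageE lessThan_iff)
  obtain b where b: "b < N" "\<sigma> b = j" using bij unfolding bij_betw_def by (metis UNIV_I imageE lessThan_iff)
  have "a \<noteq> b" using a b ij by auto
  then have "t a \<noteq> t b" using chain_dec[of L t, OF dec] a b L
    by (metis less_Suc_eq_le linorder_neqE_nat order_less_irrefl)
  then show "\<bar>x $ i\<bar> \<noteq> \<bar>x $ j\<bar>" using eq a b L by auto
qed

lemma sgn_sq: "(x::real) \<noteq> 0 \<Longrightarrow> sgn x * sgn x = 1"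
  by (simp add: sgn_real_def)
lemma sgn_abs': "sgn (x::real) * x = \<bar>x\<bar>"
  by (simp add: sgn_real_def)

lemma ax_inner:
  assumes "bij_betw \<sigma> {..<N} (UNIV :: 'n::finite set)" "i < N" "k < N"
  shows "(axis (\<sigma> i) 1 :: real^'n) \<bullet> axis (\<sigma> k) 1 = (if i = k then 1 else 0)"
  using assms by (auto simp: inner_axis_axis bij_betw_def inj_on_eq_iff)

lemma abs_sgn1: "(x::real) \<noteq> 0 \<Longrightarrow> \<bar>sgn x\<bar> = 1"
  by (simp add: sgn_real_def)

lemma caseA:
  fixes p :: "real ^ 'n::{finite,wellorder}"
  assumes bij: "bij_betw \<sigma> {..<N} UNIV" and L: "N = Suc L"
    and dec: "\<And>a b. a < b \<Longrightarrow> b < N \<Longrightarrow> \<bar>p $ \<sigma> b\<bar> < \<bar>p $ \<sigma> a\<bar>"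
    and pf: "p $ first_idx \<noteq> 0" and A: "\<sigma> L = first_idx"
  shows "\<exists>w v :: nat \<Rightarrow> real^('n::{finite,wellorder}). (\<forall>i j. i<N \<longrightarrow> j<N \<longrightarrow> w i \<bullet> v j = (if i=j then 1 else 0))
     \<and> (\<forall>x k. x \<notin> \<Union>arrB \<longrightarrow> k<N \<longrightarrow> w k \<bullet> x \<noteq> 0) \<and> (\<forall>k<N. w k \<bullet> p > 0)
     \<and> (\<forall>x. (\<forall>k<N. w k \<bullet> x > 0) \<longrightarrow> x \<notin> \<Union>arrB)"
proof -
  define s where "s = (\<lambda>k. sgn (p $ \<sigma> k))"
  define Y where "Y = (\<lambda>k. s k *\<^sub>R axis (\<sigma> k) (1::real))"
  have pnz: "\<And>k. k < N \<Longrightarrow> p $ \<sigma> k \<noteq> 0"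
  proof -
    fix k assume k: "k<N"
    show "p $ \<sigma> k \<noteq> 0"
    proof (cases "k = L")
      case True then show ?thesis using A pf by simp
    next
      case False then have "k < L" using k L by simp
      then have "\<bar>p $ \<sigma> L\<bar> < \<bar>p $ \<sigma> k\<bar>" using dec L by simp
      then show ?thesis by auto
    qed
  qed
  have ss: "\<And>k. k<N \<Longrightarrow> s k * s k = 1" using pnz sgn_sq unfolding s_def by blast
  have sa: "\<And>k. k<N \<Longrightarrow> \<bar>s k\<bar> = 1" using pnz abs_sgn1 unfolding s_def by blast
  have sp: "\<And>k. s k * p $ \<sigma> k = \<bar>p $ \<sigma> k\<bar>" unfolding s_def by (rule sgn_abs')
  have YY: "\<And>i k. i<N \<Longrightarrow> k<N \<Longrightarrow> Y i \<bullet> Y k = (if i = k then 1 else 0)"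
    using ax_inner[OF bij] ss by (auto simp: Y_def)
  have Yx: "\<And>k x. Y k \<bullet> x = s k * x $ \<sigma> k" by (simp add: Y_def inner_axis')
  define w where "w = (\<lambda>k. if k < L then Y k - Y (Suc k) else Y k)"
  define v where "v = (\<lambda>j. \<Sum>k\<in>{..j}. Y k)"
  have Yv: "\<And>i j. i<N \<Longrightarrow> j<N \<Longrightarrow> Y i \<bullet> v j = (if i \<le> j then 1 else 0)"
  proof -
    fix i j assume ij: "i<N" "j<N"
    have "Y i \<bullet> v j = (\<Sum>k\<in>{..j}. (if i = k then 1 else 0))"
      unfolding v_def inner_sum_right using ij by (auto intro!: sum.cong simp: YY)
    also have "\<dots> = (if i \<le> j then 1 else 0)" by simp
    finally show "Y i \<bullet> v j = (if i \<le> j then 1 else 0)" .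
  qed
  have wx1: "\<And>k x. k < L \<Longrightarrow> w k \<bullet> x = s k * x $ \<sigma> k - s (Suc k) * x $ \<sigma> (Suc k)"
    by (simp add: w_def inner_diff_left Yx)
  have wx2: "\<And>x. w L \<bullet> x = s L * x $ \<sigma> L"
    by (simp add: w_def Yx)
  show ?thesis
  proof (intro exI conjI allI impI)
    fix i j assume ij: "i < N" "j < N"
    show "w i \<bullet> v j = (if i=j then 1 else 0)"
    proof (cases "i < L")
      case True then show ?thesis using ij Yv L by (auto simp: w_def inner_diff_left)
    next
      case False then have "i = L" using ij L by simp
      then show ?thesis using ij Yv L by (auto simp: w_def)
    qed
  next
    fix x :: "real^('n::{finite,wellorder})" and k assume x: "x \<notin> \<Union>arrB" and k: "k < N"
    have xf: "x $ first_idx \<noteq> 0" and xd: "\<And>i j. i \<noteq> j \<Longrightarrow> \<bar>x $ i\<bar> \<noteq> \<bar>x $ j\<bar>"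
      using x unfolding U_char by auto
    show "w k \<bullet> x \<noteq> 0"
    proof (cases "k < L")
      case True
      have ne: "\<sigma> k \<noteq> \<sigma> (Suc k)" using bij True L by (metis bij_betw_imp_inj_on inj_on_eq_iff lessThan_iff less_SucI Suc_mono n_not_Suc_n)
      show ?thesis
      proof
        assume "w k \<bullet> x = 0"
        then have "s k * x $ \<sigma> k = s (Suc k) * x $ \<sigma> (Suc k)" using wx1 True by simp
        then have "\<bar>s k\<bar> * \<bar>x $ \<sigma> k\<bar> = \<bar>s (Suc k)\<bar> * \<bar>x $ \<sigma> (Suc k)\<bar>" by (metis abs_mult)
        then show False using sa True L xd ne by simp
      qed
    next
      case False then have "k = L" using k L by simp
      then show ?thesis using wx2 xf A sa L by (metis abs_zero mult_eq_0_iff lessI zero_neq_one)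
    qed
  next
    fix k assume k: "k < N"
    show "w k \<bullet> p > 0"
    proof (cases "k < L")
      case True then show ?thesis using wx1 sp dec[of k "Suc k"] L by simp
    next
      case False then have "k = L" using k L by simp
      then show ?thesis using wx2 sp pnz L by simp
    qed
  next
    fix x :: "real^('n::{finite,wellorder})" assume x: "\<forall>k<N. w k \<bullet> x > 0"
    define t where "t = (\<lambda>k. s k * x $ \<sigma> k)"
    have td: "\<And>k. k < L \<Longrightarrow> t (Suc k) < t k" using x wx1 L unfolding t_def
      by (metis diff_gt_0_iff_gt less_SucI)
    have tL: "t L > 0" using x wx2[of x] L unfolding t_def by (metis lessI)
    have tpos: "\<And>k. k \<le> L \<Longrightarrow> t k > 0"
      by (metis chain_dec[where t=t and L=L, OF td] le_neq_implies_less order.strict_trans tL le_refl)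
    have teq: "\<And>k. k \<le> L \<Longrightarrow> \<bar>x $ \<sigma> k\<bar> = t k"
    proof -
      fix k assume k: "k \<le> L"
      have "\<bar>t k\<bar> = \<bar>x $ \<sigma> k\<bar>" unfolding t_def abs_mult using sa k L by simp
      then show "\<bar>x $ \<sigma> k\<bar> = t k" using tpos[OF k] by simp
    qed
    have "x $ first_idx \<noteq> 0" using teq[of L] tL A by simp
    then show "x \<notin> \<Union>arrB" using inU[where t=t, OF bij L td teq] by blast
  qed
qed

lemma caseB:
  fixes p :: "real ^ 'n::{finite,wellorder}"
  assumes bij: "bij_betw \<sigma> {..<N} UNIV" and L: "N = Suc L" and L1: "L = Suc L1"
    and dec: "\<And>a b. a < b \<Longrightarrow> b < N \<Longrightarrow> \<bar>p $ \<sigma> b\<bar> < \<bar>p $ \<sigma> a\<bar>"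
    and B: "\<sigma> L \<noteq> first_idx"
  shows "\<exists>w v :: nat \<Rightarrow> real^('n::{finite,wellorder}). (\<forall>i j. i<N \<longrightarrow> j<N \<longrightarrow> w i \<bullet> v j = (if i=j then 1 else 0))
     \<and> (\<forall>x k. x \<notin> \<Union>arrB \<longrightarrow> k<N \<longrightarrow> w k \<bullet> x \<noteq> 0) \<and> (\<forall>k<N. w k \<bullet> p > 0)
     \<and> (\<forall>x. (\<forall>k<N. w k \<bullet> x > 0) \<longrightarrow> x \<notin> \<Union>arrB)"
proof -
  define m where "m = \<sigma> L"
  define s where "s = (\<lambda>k. sgn (p $ \<sigma> k))"
  define Y where "Y = (\<lambda>k. s k *\<^sub>R axis (\<sigma> k) (1::real))"
  define E where "E = axis m (1::real)"
  have inj: "\<And>a b. a < N \<Longrightarrow> b < N \<Longrightarrow> \<sigma> a = \<sigma> b \<longleftrightarrow> a = b"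
    using bij by (metis bij_betw_imp_inj_on inj_on_eq_iff lessThan_iff)
  have pnz: "\<And>k. k \<le> L1 \<Longrightarrow> p $ \<sigma> k \<noteq> 0"
  proof -
    fix k assume k: "k \<le> L1"
    then have "\<bar>p $ \<sigma> L\<bar> < \<bar>p $ \<sigma> k\<bar>" using dec L L1 by simp
    then show "p $ \<sigma> k \<noteq> 0" by auto
  qed
  have ss: "\<And>k. k \<le> L1 \<Longrightarrow> s k * s k = 1" using pnz sgn_sq unfolding s_def by blast
  have sa: "\<And>k. k \<le> L1 \<Longrightarrow> \<bar>s k\<bar> = 1" using pnz abs_sgn1 unfolding s_def by blast
  have sp: "\<And>k. s k * p $ \<sigma> k = \<bar>p $ \<sigma> k\<bar>" unfolding s_def by (rule sgn_abs')
  have YY: "\<And>i k. i \<le> L1 \<Longrightarrow> k \<le> L1 \<Longrightarrow> Y i \<bullet> Y k = (if i = k then 1 else 0)"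
    using ax_inner[OF bij] ss L L1 by (auto simp: Y_def)
  have EY: "\<And>k. k \<le> L1 \<Longrightarrow> E \<bullet> Y k = 0"
    using ax_inner[OF bij, of L] L L1 by (auto simp: Y_def E_def m_def)
  have EE: "E \<bullet> E = 1" by (simp add: E_def inner_axis_axis)
  have Yx: "\<And>k x. Y k \<bullet> x = s k * x $ \<sigma> k" by (simp add: Y_def inner_axis')
  have Ex: "\<And>x. E \<bullet> x = x $ m" by (simp add: E_def inner_axis')
  define Sj where "Sj = (\<lambda>j. \<Sum>k\<in>{..j}. Y k)"
  have YS: "\<And>i j. i \<le> L1 \<Longrightarrow> j \<le> L1 \<Longrightarrow> Y i \<bullet> Sj j = (if i \<le> j then 1 else 0)"
  proof -
    fix i j assume ij: "i \<le> L1" "j \<le> L1"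
    have "Y i \<bullet> Sj j = (\<Sum>k\<in>{..j}. (if i = k then 1 else 0))"
      unfolding Sj_def inner_sum_right using ij by (auto intro!: sum.cong simp: YY)
    also have "\<dots> = (if i \<le> j then 1 else 0)" by simp
    finally show "Y i \<bullet> Sj j = (if i \<le> j then 1 else 0)" .
  qed
  have ES: "\<And>j. j \<le> L1 \<Longrightarrow> E \<bullet> Sj j = 0"
    unfolding Sj_def inner_sum_right by (auto intro!: sum.neutral simp: EY)
  have SE: "\<And>j. j \<le> L1 \<Longrightarrow> Sj j \<bullet> E = 0" using ES by (simp add: inner_commute)
  have YE: "\<And>j. j \<le> L1 \<Longrightarrow> Y j \<bullet> E = 0" using EY by (simp add: inner_commute)
  define w where "w = (\<lambda>k. if k < L1 then Y k - Y (Suc k) else if k = L1 then Y L1 - E else Y L1 + E)"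
  define v where "v = (\<lambda>j. if j < L1 then Sj j else if j = L1 then (1/2) *\<^sub>R (Sj L1 - E) else (1/2) *\<^sub>R (Sj L1 + E))"
  have wx1: "\<And>k x. k < L1 \<Longrightarrow> w k \<bullet> x = s k * x $ \<sigma> k - s (Suc k) * x $ \<sigma> (Suc k)"
    by (simp add: w_def inner_diff_left Yx)
  have wx2: "\<And>x. w L1 \<bullet> x = s L1 * x $ \<sigma> L1 - x $ m"
    by (simp add: w_def inner_diff_left Yx Ex)
  have wx3: "\<And>x. w L \<bullet> x = s L1 * x $ \<sigma> L1 + x $ m"
    using L1 by (simp add: w_def inner_add_left Yx Ex)
  show ?thesis
  proof (intro exI conjI allI impI)
    fix i j assume ij: "i < N" "j < N"
    have i3: "i < L1 \<or> i = L1 \<or> i = L" and j3: "j < L1 \<or> j = L1 \<or> j = L" using ij L L1 by auto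
    have nL: "L1 \<noteq> L" "\<not> L < L1" "\<not> L1 < L1" using L1 by auto
    show "w i \<bullet> v j = (if i=j then 1 else 0)"
      using i3
    proof (elim disjE)
      assume ii: "i < L1"
      show ?thesis using j3
      proof (elim disjE)
        assume jj: "j < L1" show ?thesis using ii jj
          by (simp add: w_def v_def inner_diff_left YS Suc_le_eq)
      next
        assume jj: "j = L1" show ?thesis using ii jj nL
          by (simp add: w_def v_def inner_diff_left inner_diff_right YS YE Suc_le_eq)
      next
        assume jj: "j = L" show ?thesis using ii jj nL
          by (simp add: w_def v_def inner_diff_left inner_add_right YS YE Suc_le_eq)
      qed
    next
      assume ii: "i = L1"
      show ?thesis using j3
      proof (elim disjE)
        assume jj: "j < L1" show ?thesis using ii jj nL
          by (simp add: w_def v_def inner_diff_left YS ES)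
      next
        assume jj: "j = L1" show ?thesis using ii jj nL
          by (simp add: w_def v_def inner_diff_left inner_diff_right YS YE ES EE)
      next
        assume jj: "j = L" show ?thesis using ii jj nL
          by (simp add: w_def v_def inner_diff_left inner_add_right YS YE ES EE)
      qed
    next
      assume ii: "i = L"
      show ?thesis using j3
      proof (elim disjE)
        assume jj: "j < L1" show ?thesis using ii jj nL
          by (simp add: w_def v_def inner_add_left YS ES)
      next
        assume jj: "j = L1" show ?thesis using ii jj nL
          by (simp add: w_def v_def inner_add_left inner_diff_right YS YE ES EE)
      next
        assume jj: "j = L" show ?thesis using ii jj nL
          by (simp add: w_def v_def inner_add_left inner_add_right YS YE ES EE)
      qed
    qed
  next
    fix x :: "real^('n::{finite,wellorder})" and k assume x: "x \<notin> \<Union>arrB" and k: "k < N"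
    have xd: "\<And>i j. i \<noteq> j \<Longrightarrow> \<bar>x $ i\<bar> \<noteq> \<bar>x $ j\<bar>"
      using x unfolding U_char by auto
    have k3: "k < L1 \<or> k = L1 \<or> k = L" using k L L1 by auto
    show "w k \<bullet> x \<noteq> 0"
    proof
      assume w0: "w k \<bullet> x = 0"
      show False using k3
      proof (elim disjE)
        assume kk: "k < L1"
        have ne: "\<sigma> k \<noteq> \<sigma> (Suc k)" using inj[of k "Suc k"] kk L L1 by simp
        have "s k * x $ \<sigma> k = s (Suc k) * x $ \<sigma> (Suc k)" using wx1 w0 kk by simp
        then have "\<bar>s k\<bar> * \<bar>x $ \<sigma> k\<bar> = \<bar>s (Suc k)\<bar> * \<bar>x $ \<sigma> (Suc k)\<bar>" by (metis abs_mult)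
        then show False using sa kk xd ne by simp
      next
        assume kk: "k = L1"
        have ne: "\<sigma> L1 \<noteq> m" using inj[of L1 L] L L1 m_def by simp
        have "s L1 * x $ \<sigma> L1 = x $ m" using wx2 w0 kk by simp
        then have "\<bar>s L1\<bar> * \<bar>x $ \<sigma> L1\<bar> = \<bar>x $ m\<bar>" by (metis abs_mult)
        then show False using sa xd ne by simp
      next
        assume kk: "k = L"
        have ne: "\<sigma> L1 \<noteq> m" using inj[of L1 L] L L1 m_def by simp
        have "s L1 * x $ \<sigma> L1 = - x $ m" using wx3 w0 kk by simp
        then have "\<bar>s L1\<bar> * \<bar>x $ \<sigma> L1\<bar> = \<bar>x $ m\<bar>" by (metis abs_mult abs_minus_cancel)
        then show False using sa xd ne by simp
      qed
    qed
  next
    fix k assume k: "k < N"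
    have k3: "k < L1 \<or> k = L1 \<or> k = L" using k L L1 by auto
    have pm: "\<bar>p $ m\<bar> < \<bar>p $ \<sigma> L1\<bar>" using dec[of L1 L] L L1 m_def by simp
    show "w k \<bullet> p > 0" using k3
    proof (elim disjE)
      assume kk: "k < L1" then show ?thesis using wx1 sp dec[of k "Suc k"] L L1 by simp
    next
      assume kk: "k = L1" then show ?thesis using wx2 sp pm by (simp add: abs_less_iff)
    next
      assume kk: "k = L" then show ?thesis using wx3 sp pm by (simp add: abs_less_iff)
    qed
  next
    fix x :: "real^('n::{finite,wellorder})" assume x: "\<forall>k<N. w k \<bullet> x > 0"
    define t where "t = (\<lambda>k. if k \<le> L1 then s k * x $ \<sigma> k else \<bar>x $ m\<bar>)"
    have td: "\<And>k. k < L \<Longrightarrow> t (Suc k) < t k"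
    proof -
      fix k assume k: "k < L"
      show "t (Suc k) < t k"
      proof (cases "k < L1")
        case True
        have "w k \<bullet> x > 0" using x k L by simp
        then show ?thesis using True wx1 unfolding t_def by simp
      next
        case False then have kk: "k = L1" using k L1 by simp
        have "w L1 \<bullet> x > 0" "w L \<bullet> x > 0" using x L L1 by auto
        then show ?thesis using kk wx2 wx3 L1 unfolding t_def by (simp add: abs_less_iff)
      qed
    qed
    have tL: "t L \<ge> 0" using L1 unfolding t_def by simp
    have tpos: "\<And>k. k \<le> L1 \<Longrightarrow> t k > 0"
    proof -
      fix k assume k: "k \<le> L1"
      have "t L < t k" by (rule chain_dec[where t=t and L=L, OF td]) (use k L1 in auto)
      then show "t k > 0" using tL by simp
    qed
    have teq: "\<And>k. k \<le> L \<Longrightarrow> \<bar>x $ \<sigma> k\<bar> = t k"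
    proof -
      fix k assume k: "k \<le> L"
      show "\<bar>x $ \<sigma> k\<bar> = t k"
      proof (cases "k \<le> L1")
        case True
        have "\<bar>t k\<bar> = \<bar>x $ \<sigma> k\<bar>" unfolding t_def using sa[OF True] True by (simp add: abs_mult)
        then show ?thesis using tpos[OF True] by simp
      next
        case False then have "k = L" using k L1 by simp
        then show ?thesis using L1 unfolding t_def m_def by simp
      qed
    qed
    obtain a where a: "a < N" "\<sigma> a = first_idx"
      using bij unfolding bij_betw_def by (metis UNIV_I imageE lessThan_iff)
    have "a \<noteq> L" using a B by auto
    then have "a \<le> L1" using a L L1 by simp
    then have "x $ first_idx \<noteq> 0" using teq[of a] tpos[of a] a L1 by fastforce
    then show "x \<notin> \<Union>arrB" using inU[where t=t, OF bij L td teq] by blast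
  qed
qed

lemma chamber_eq:
  fixes w :: "nat \<Rightarrow> 'a::euclidean_space"
  assumes C: "C \<in> components U" and p: "p \<in> C"
    and nz: "\<And>x k. x \<in> U \<Longrightarrow> k < N \<Longrightarrow> w k \<bullet> x \<noteq> 0"
    and pK: "\<forall>k<N. w k \<bullet> p > 0"
    and KU: "\<forall>x. (\<forall>k<N. w k \<bullet> x > 0) \<longrightarrow> x \<in> U"
  shows "C = {x. \<forall>k<N. w k \<bullet> x > 0}"
proof -
  define K where "K = {x. \<forall>k<N. w k \<bullet> x > 0}"
  have CU: "C \<subseteq> U" using C by (rule in_components_subset)
  obtain q where q: "C = connected_component_set U q" using C components_iff by blast
  have Ceq: "C = connected_component_set U p"
    using q p connected_component_eq by blast
  have "K = (\<Inter>k\<in>{..<N}. {x. w k \<bullet> x > 0})" unfolding K_def by auto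
  then have "convex K" by (simp add: convex_INT convex_halfspace_gt)
  then have cK: "connected K" by (rule convex_connected)
  have "K \<subseteq> C" unfolding Ceq
    by (rule connected_component_maximal) (use pK KU cK in \<open>auto simp: K_def\<close>)
  moreover have "C \<subseteq> K"
  proof
    fix x assume x: "x \<in> C"
    have "\<forall>k<N. w k \<bullet> x > 0"
    proof (intro allI impI)
      fix k assume k: "k < N"
      have cC: "connected C" using C by (rule in_components_connected)
      have "continuous_on C (\<lambda>y. w k \<bullet> y)" by (intro continuous_intros)
      then have ci: "connected ((\<lambda>y. w k \<bullet> y) ` C)" using cC connected_continuous_image by blast
      show "w k \<bullet> x > 0"
      proof (rule ccontr)
        assume "\<not> w k \<bullet> x > 0"
        then have neg: "w k \<bullet> x < 0" using nz[of x k] x CU k by force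
        have iv: "\<forall>a\<in>(\<lambda>y. w k \<bullet> y) ` C. \<forall>b\<in>(\<lambda>y. w k \<bullet> y) ` C. \<forall>z. a \<le> z \<longrightarrow> z \<le> b \<longrightarrow> z \<in> (\<lambda>y. w k \<bullet> y) ` C"
          using ci connected_iff_interval by blast
        have a: "w k \<bullet> x \<in> (\<lambda>y. w k \<bullet> y) ` C" using x by blast
        have b: "w k \<bullet> p \<in> (\<lambda>y. w k \<bullet> y) ` C" using p by blast
        have "0 \<in> (\<lambda>y. w k \<bullet> y) ` C"
          using iv[rule_format, OF a b, of 0] neg pK k by (simp add: less_imp_le)
        then obtain y where "y \<in> C" "w k \<bullet> y = 0" by auto
        then show False using nz[of y k] CU k by auto
      qed
    qed
    then show "x \<in> K" unfolding K_def by simp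
  qed
  ultimately show ?thesis unfolding K_def by blast
qed

theorem lemma3p1:
  fixes A :: "(real ^ ('n::{finite,wellorder})) set set"
  assumes "CARD('n) \<ge> 2"
    and "A = arrB"
  shows "simplicial_arrangement A"
  unfolding simplicial_arrangement_def chambers_def
proof
  fix C assume C: "C \<in> components (UNIV - \<Union>A)"
  obtain p where p: "p \<in> C" using in_components_nonempty[OF C] by blast
  have pU: "p \<notin> \<Union>arrB" using in_components_subset[OF C] p assms(2) by blast
  then have pf: "p $ first_idx \<noteq> 0" and pd: "\<And>i j. i \<noteq> j \<Longrightarrow> \<bar>p $ i\<bar> \<noteq> \<bar>p $ j\<bar>"
    unfolding U_char by auto
  obtain \<sigma> where bij: "bij_betw \<sigma> {..<CARD('n)} UNIV"
    and dec: "\<And>a b. a < b \<Longrightarrow> b < CARD('n) \<Longrightarrow> \<bar>p $ \<sigma> b\<bar> < \<bar>p $ \<sigma> a\<bar>"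
    using sort_abs[OF pd] by blast
  have "CARD('n) = Suc (CARD('n) - 1)" using assms(1) by simp
  then obtain L where L: "CARD('n) = Suc L" by blast
  obtain w v :: "nat \<Rightarrow> real^('n::{finite,wellorder})" where
    bo: "\<forall>i j. i<CARD('n) \<longrightarrow> j<CARD('n) \<longrightarrow> w i \<bullet> v j = (if i=j then 1 else 0)"
    and nz: "\<forall>x k. x \<notin> \<Union>arrB \<longrightarrow> k<CARD('n) \<longrightarrow> w k \<bullet> x \<noteq> 0" and pK: "\<forall>k<CARD('n). w k \<bullet> p > 0"
    and KU: "\<forall>x. (\<forall>k<CARD('n). w k \<bullet> x > 0) \<longrightarrow> x \<notin> \<Union>arrB"
  proof (cases "\<sigma> L = first_idx")
    case True
    show ?thesis
      apply (rule caseA[where p=p and \<sigma>=\<sigma> and N="CARD('n)" and L=L, OF bij L _ pf True, THEN exE])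
       apply (rule dec; assumption)
      apply (elim exE conjE)
      apply (rule that; assumption)
      done
  next
    case False
    have "L = Suc (L - 1)" using assms(1) L by simp
    then obtain L1 where L1: "L = Suc L1" by blast
    show ?thesis
      apply (rule caseB[where p=p and \<sigma>=\<sigma> and N="CARD('n)" and L=L, OF bij L L1 _ False, THEN exE])
       apply (rule dec; assumption)
      apply (elim exE conjE)
      apply (rule that; assumption)
      done
  qed
  have "C = {x. \<forall>k<CARD('n). w k \<bullet> x > 0}"
    by (rule chamber_eq[OF C p]) (use nz pK KU assms(2) in auto)
  then show "open_simplicial_cone C"
    using biorth[of "CARD('n)" w v] bo by simp
qed

end
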